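(* Let $(m_\epsilon)_{\epsilon\in(0,1)}$ satisfy Assumption P with constant $K$. If $m_\epsilon\to\infty$ and $\bar\sigma_{m_\epsilon}\to0$ as $\epsilon\to0$, then $$\lim_{\epsilon\to0}\mathbb E_{\theta^\circ}P_{\vartheta^{m_\epsilon}|Y}\Big((10K)^{-1}[b_{m_\epsilon}\vee\bar\sigma_{m_\epsilon}]\le\|\vartheta^{m_\epsilon}-\theta^\circ\|^2\le10K[b_{m_\epsilon}\vee\bar\sigma_{m_\epsilon}]\Big)=1.$$
   Context: Let $\ell^2$ be the space of square-summable real sequences with norm $\|\cdot\|$. Fix a bounded real sequence $\lambda=(\lambda_j)_{j\ge1}$ with $\lambda_j\ne0$ for all $j$, a noise level $\epsilon\in(0,1)$ and a true parameter $\theta^\circ\in\ell^2$. The data $Y=(Y_j)_{j\ge1}$ satisfy $Y_j=\lambda_j\theta^\circ_j+\sqrt\epsilon\,\xi_j$ with $\xi_j$ i.i.d. $N(0,1)$; $\mathbb E_{\theta^\circ}$, $P_{\theta^\circ}$ denote expectation and probability under this law. Fix prior means $\eta=(\eta_j)_{j\ge1}$ with $\theta^\circ-\eta\in\ell^2$ and prior variances $\tau_j\in(0,\infty)$ (possibly depending on $\epsilon$). For $m\in\mathbb N$ the sieve prior $P_{\vartheta^m}$ is the law of $\vartheta^m=(\vartheta^m_j)_{j\ge1}$ with independent coordinates, $\vartheta^m_j\sim N(\eta_j,\tau_j)$ for $j\le m$ and $\vartheta^m_j=\eta_j$ a.s. for $j>m$, in the model $Y_j=\lambda_j\vartheta^m_j+\sqrt\epsilon\xi_j$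 with $\vartheta^m$ independent of $(\xi_j)$. Put $\sigma_j:=(\lambda_j^2\epsilon^{-1}+\tau_j^{-1})^{-1}$ and $\theta^Y_j:=\sigma_j(\tau_j^{-1}\eta_j+\lambda_j\epsilon^{-1}Y_j)$. The posterior $P_{\vartheta^m|Y}$ makes the coordinates independent with $\vartheta^m_j\sim N(\theta^Y_j,\sigma_j)$ for $j\le m$ and $\vartheta^m_j=\eta_j$ for $j>m$; the Bayes estimator is $\hat\theta^m:=\mathbb E[\vartheta^m|Y]$, i.e. $\hat\theta^m_j=\theta^Y_j$ for $j\le m$, $\hat\theta^m_j=\eta_j$ for $j>m$. Define $b_m:=\sum_{j>m}(\theta^\circ_j-\eta_j)^2$, $\bar\sigma_m:=\sum_{j=1}^m\sigma_j$, $\sigma_{(m)}:=\max_{1\le j\le m}\sigma_j$, $r_m:=\sum_{j=1}^m\sigma_j^2\tau_j^{-2}(\eta_j-\theta^\circ_j)^2$ (the quantities involving $\sigma$ depend on $\epsilon$). Assumption P for a family $(m_\epsilon)_{\epsilon\in(0,1)}\subset\mathbb N$: there exist constants $\epsilon_\theta\in(0,1)$ and $K\in[1,\infty)$ (depending on $\theta^\circ,\lambda,\eta,\tau$) such that $\sup_{0<\epsilon<\epsilon_\theta}(r_{m_\epsilon}\vee m_\epsilon\sigma_{(m_\epsilon)})/(b_{m_\epsilon}\vee\bar\sigma_{m_\epsilon})\le K$. *)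

theory Defs
  imports "HOL-Probability.Probability"
begin

text \<open>Coordinates are indexed from 0: paper index j corresponds to j-1 here,
  so the first m coordinates are {..<m}.\<close>

definition sq_norm :: "(nat \<Rightarrow> real) \<Rightarrow> real" where
  "sq_norm f = (\<Sum>j. (f j)\<^sup>2)"

definition post_var :: "(nat \<Rightarrow> real) \<Rightarrow> real \<Rightarrow> (nat \<Rightarrow> real) \<Rightarrow> nat \<Rightarrow> real" where
  "post_var lam eps tau j = inverse ((lam j)\<^sup>2 / eps + inverse (tau j))"

definition post_mean ::
  "(nat \<Rightarrow> real) \<Rightarrow> (nat \<Rightarrow> real) \<Rightarrow> real \<Rightarrow> (nat \<Rightarrow> real) \<Rightarrow> (nat \<Rightarrow> real) \<Rightarrow> nat \<Rightarrow> real" where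
  "post_mean lam eta eps tau Y j =
     post_var lam eps tau j * (eta j / tau j + lam j * Y j / eps)"

definition data_law :: "(nat \<Rightarrow> real) \<Rightarrow> (nat \<Rightarrow> real) \<Rightarrow> real \<Rightarrow> (nat \<Rightarrow> real) measure" where
  "data_law lam theta eps =
     PiM UNIV (\<lambda>j. density lborel (normal_density (lam j * theta j) (sqrt eps)))"

text \<open>Sieve posterior: independent coordinates, N(theta^Y_j, sigma_j) for the first m,
  point mass at eta_j otherwise (normal_density takes the standard deviation).\<close>
definition sieve_posterior ::
  "(nat \<Rightarrow> real) \<Rightarrow> (nat \<Rightarrow> real) \<Rightarrow> real \<Rightarrow> (nat \<Rightarrow> real) \<Rightarrow> nat \<Rightarrow> (nat \<Rightarrow> real)
     \<Rightarrow> (nat \<Rightarrow> real) measure" where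
  "sieve_posterior lam eta eps tau m Y =
     PiM UNIV (\<lambda>j. if j < m
        then density lborel (normal_density (post_mean lam eta eps tau Y j) (sqrt (post_var lam eps tau j)))
        else return borel (eta j))"

definition bias :: "(nat \<Rightarrow> real) \<Rightarrow> (nat \<Rightarrow> real) \<Rightarrow> nat \<Rightarrow> real" where
  "bias theta eta m = (\<Sum>j. (theta (j + m) - eta (j + m))\<^sup>2)"

definition sigma_bar :: "(nat \<Rightarrow> real) \<Rightarrow> real \<Rightarrow> (nat \<Rightarrow> real) \<Rightarrow> nat \<Rightarrow> real" where
  "sigma_bar lam eps tau m = (\<Sum>j<m. post_var lam eps tau j)"

text \<open>Maximum of sigma_1..sigma_m (the sigma_j are positive, so inserting 0 only
  matters for m = 0).\<close>
definition sigma_max :: "(nat \<Rightarrow> real) \<Rightarrow> real \<Rightarrow> (nat \<Rightarrow> real) \<Rightarrow> nat \<Rightarrow> real" where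
  "sigma_max lam eps tau m = Max (insert 0 (post_var lam eps tau ` {..<m}))"

definition rterm ::
  "(nat \<Rightarrow> real) \<Rightarrow> (nat \<Rightarrow> real) \<Rightarrow> (nat \<Rightarrow> real) \<Rightarrow> real \<Rightarrow> (nat \<Rightarrow> real) \<Rightarrow> nat \<Rightarrow> real" where
  "rterm lam theta eta eps tau m =
     (\<Sum>j<m. (post_var lam eps tau j)\<^sup>2 / (tau j)\<^sup>2 * (eta j - theta j)\<^sup>2)"

definition assumption_P ::
  "(nat \<Rightarrow> real) \<Rightarrow> (nat \<Rightarrow> real) \<Rightarrow> (nat \<Rightarrow> real) \<Rightarrow> (real \<Rightarrow> nat \<Rightarrow> real) \<Rightarrow> (real \<Rightarrow> nat)
     \<Rightarrow> real \<Rightarrow> real \<Rightarrow> bool" where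
  "assumption_P lam theta eta tau m eps_th K \<longleftrightarrow>
     0 < eps_th \<and> eps_th < 1 \<and> 1 \<le> K \<and>
     (\<forall>eps. 0 < eps \<and> eps < eps_th \<longrightarrow>
        max (rterm lam theta eta eps (tau eps) (m eps)) (real (m eps) * sigma_max lam eps (tau eps) (m eps))
        / max (bias theta eta (m eps)) (sigma_bar lam eps (tau eps) (m eps)) \<le> K)"

end

theory Submission
  imports Defs
begin

lemma PiM_UNIV_prod:
  fixes F :: "nat \<Rightarrow> real measure" and f :: "nat \<Rightarrow> real \<Rightarrow> real"
  assumes P: "\<And>i. prob_space (F i)" and K: "finite K"
    and int: "\<And>k. k \<in> K \<Longrightarrow> integrable (F k) (f k)"
  shows "integrable (PiM UNIV F) (\<lambda>x. \<Prod>k\<in>K. f k (x k))"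
    and "(\<integral>x. (\<Prod>k\<in>K. f k (x k)) \<partial>PiM UNIV F) = (\<Prod>k\<in>K. integral\<^sup>L (F k) (f k))"
proof -
  interpret product_prob_space F UNIV
    using P by (simp add: product_prob_spaceI)
  have D: "distr (PiM UNIV F) (PiM K F) (\<lambda>x. restrict x K) = PiM K F"
    using K by (intro distr_PiM_restrict_finite) auto
  have m: "(\<lambda>x. \<Prod>k\<in>K. f k (x k)) \<in> borel_measurable (PiM K F)"
    using int by (intro borel_measurable_prod) auto
  have eq: "(\<lambda>x. \<Prod>k\<in>K. f k (restrict x K k)) = (\<lambda>x. \<Prod>k\<in>K. f k (x k))"
    by (intro ext prod.cong) auto
  have i1: "integrable (PiM K F) (\<lambda>x. \<Prod>k\<in>K. f k (x k))"
    using K int by (intro product_integrable_prod) auto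
  have "integrable (distr (PiM UNIV F) (PiM K F) (\<lambda>x. restrict x K)) (\<lambda>x. \<Prod>k\<in>K. f k (x k))"
    using i1 D by simp
  then show "integrable (PiM UNIV F) (\<lambda>x. \<Prod>k\<in>K. f k (x k))"
    by (subst (asm) integrable_distr_eq) (auto simp: m eq measurable_restrict_subset)
  have "(\<integral>x. (\<Prod>k\<in>K. f k (x k)) \<partial>PiM UNIV F) = (\<integral>x. (\<Prod>k\<in>K. f k (x k)) \<partial>distr (PiM UNIV F) (PiM K F) (\<lambda>x. restrict x K))"
    by (subst integral_distr) (auto simp: m eq measurable_restrict_subset)
  also have "\<dots> = (\<Prod>k\<in>K. integral\<^sup>L (F k) (f k))"
    unfolding D using K int by (intro product_integral_prod) auto
  finally show "(\<integral>x. (\<Prod>k\<in>K. f k (x k)) \<partial>PiM UNIV F) = (\<Prod>k\<in>K. integral\<^sup>L (F k) (f k))" .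
qed

lemma PiM_UNIV_pair_term:
  fixes F :: "nat \<Rightarrow> real measure" and h :: "nat \<Rightarrow> real \<Rightarrow> real"
  assumes P: "\<And>i. prob_space (F i)"
    and hm: "integrable (F i) (h i)" "integrable (F j) (h j)"
    and h2: "integrable (F i) (\<lambda>y. (h i y)\<^sup>2)"
    and h0: "integral\<^sup>L (F i) (h i) = 0"
  shows "integrable (PiM UNIV F) (\<lambda>x. h i (x i) * h j (x j))"
    and "(\<integral>x. h i (x i) * h j (x j) \<partial>PiM UNIV F) = (if i = j then (\<integral>y. (h i y)\<^sup>2 \<partial>F i) else 0)"
proof -
  have "integrable (PiM UNIV F) (\<lambda>x. h i (x i) * h j (x j)) \<and>
    (\<integral>x. h i (x i) * h j (x j) \<partial>PiM UNIV F) = (if i = j then (\<integral>y. (h i y)\<^sup>2 \<partial>F i) else 0)"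
  proof (cases "i = j")
    case True
    have a: "integrable (PiM UNIV F) (\<lambda>x. \<Prod>k\<in>{i}. (\<lambda>k y. (h k y)\<^sup>2) k (x k))"
      and b: "(\<integral>x. (\<Prod>k\<in>{i}. (\<lambda>k y. (h k y)\<^sup>2) k (x k)) \<partial>PiM UNIV F) = (\<Prod>k\<in>{i}. integral\<^sup>L (F k) ((\<lambda>k y. (h k y)\<^sup>2) k))"
      using h2 by (intro PiM_UNIV_prod[OF P]; auto)+
    show ?thesis using a b True by (simp add: power2_eq_square)
  next
    case False
    have a: "integrable (PiM UNIV F) (\<lambda>x. \<Prod>k\<in>{i,j}. h k (x k))"
      and b: "(\<integral>x. (\<Prod>k\<in>{i,j}. h k (x k)) \<partial>PiM UNIV F) = (\<Prod>k\<in>{i,j}. integral\<^sup>L (F k) (h k))"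
      using hm by (intro PiM_UNIV_prod[OF P]; auto)+
    show ?thesis using a b False h0 by simp
  qed
  then show "integrable (PiM UNIV F) (\<lambda>x. h i (x i) * h j (x j))"
    and "(\<integral>x. h i (x i) * h j (x j) \<partial>PiM UNIV F) = (if i = j then (\<integral>y. (h i y)\<^sup>2 \<partial>F i) else 0)"
    by auto
qed

lemma PiM_UNIV_sum_sq:
  fixes F :: "nat \<Rightarrow> real measure" and h :: "nat \<Rightarrow> real \<Rightarrow> real"
  assumes P: "\<And>i. prob_space (F i)" and J: "finite J"
    and hm: "\<And>j. j \<in> J \<Longrightarrow> integrable (F j) (h j)"
    and h2: "\<And>j. j \<in> J \<Longrightarrow> integrable (F j) (\<lambda>y. (h j y)\<^sup>2)"
    and h0: "\<And>j. j \<in> J \<Longrightarrow> integral\<^sup>L (F j) (h j) = 0"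
  shows "integrable (PiM UNIV F) (\<lambda>x. (\<Sum>j\<in>J. h j (x j))\<^sup>2)"
    and "(\<integral>x. (\<Sum>j\<in>J. h j (x j))\<^sup>2 \<partial>PiM UNIV F) = (\<Sum>j\<in>J. \<integral>y. (h j y)\<^sup>2 \<partial>F j)"
proof -
  have eq: "(\<lambda>x. (\<Sum>j\<in>J. h j (x j))\<^sup>2) = (\<lambda>x. \<Sum>i\<in>J. \<Sum>j\<in>J. h i (x i) * h j (x j))"
    by (simp add: power2_eq_square sum_product)
  have ti: "\<And>i j. i \<in> J \<Longrightarrow> j \<in> J \<Longrightarrow> integrable (PiM UNIV F) (\<lambda>x. h i (x i) * h j (x j))"
    by (rule PiM_UNIV_pair_term(1)[OF P hm hm h2 h0])
  have te: "\<And>i j. i \<in> J \<Longrightarrow> j \<in> J \<Longrightarrow> (\<integral>x. h i (x i) * h j (x j) \<partial>PiM UNIV F) = (if i = j then (\<integral>y. (h i y)\<^sup>2 \<partial>F i) else 0)"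
    by (rule PiM_UNIV_pair_term(2)[OF P hm hm h2 h0])
  show "integrable (PiM UNIV F) (\<lambda>x. (\<Sum>j\<in>J. h j (x j))\<^sup>2)"
  proof -
    have "integrable (PiM UNIV F) (\<lambda>x. \<Sum>i\<in>J. \<Sum>j\<in>J. h i (x i) * h j (x j))"
    proof (rule Bochner_Integration.integrable_sum[where f="\<lambda>i x. \<Sum>j\<in>J. h i (x i) * h j (x j)"])
      fix i assume "i \<in> J"
      then show "integrable (PiM UNIV F) (\<lambda>x. \<Sum>j\<in>J. h i (x i) * h j (x j))"
        by (intro Bochner_Integration.integrable_sum ti)
    qed
    then show ?thesis unfolding eq .
  qed
  have "(\<integral>x. (\<Sum>j\<in>J. h j (x j))\<^sup>2 \<partial>PiM UNIV F) = (\<Sum>i\<in>J. \<Sum>j\<in>J. (\<integral>x. h i (x i) * h j (x j) \<partial>PiM UNIV F))"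
  proof -
    have "(\<integral>x. (\<Sum>i\<in>J. \<Sum>j\<in>J. h i (x i) * h j (x j)) \<partial>PiM UNIV F) = (\<Sum>i\<in>J. (\<integral>x. (\<Sum>j\<in>J. h i (x i) * h j (x j)) \<partial>PiM UNIV F))"
    proof (rule Bochner_Integration.integral_sum[where f="\<lambda>i x. \<Sum>j\<in>J. h i (x i) * h j (x j)"])
      fix i assume "i \<in> J"
      then show "integrable (PiM UNIV F) (\<lambda>x. \<Sum>j\<in>J. h i (x i) * h j (x j))"
        by (intro Bochner_Integration.integrable_sum ti)
    qed
    also have "\<dots> = (\<Sum>i\<in>J. \<Sum>j\<in>J. (\<integral>x. h i (x i) * h j (x j) \<partial>PiM UNIV F))"
    proof (rule sum.cong[OF refl])
      fix i assume "i \<in> J"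
      then show "(\<integral>x. (\<Sum>j\<in>J. h i (x i) * h j (x j)) \<partial>PiM UNIV F) = (\<Sum>j\<in>J. (\<integral>x. h i (x i) * h j (x j) \<partial>PiM UNIV F))"
        by (intro Bochner_Integration.integral_sum ti)
    qed
    finally show ?thesis unfolding eq .
  qed
  also have "\<dots> = (\<Sum>i\<in>J. \<Sum>j\<in>J. (if i = j then (\<integral>y. (h i y)\<^sup>2 \<partial>F i) else 0))"
    by (intro sum.cong refl te)
  also have "\<dots> = (\<Sum>j\<in>J. \<integral>y. (h j y)\<^sup>2 \<partial>F j)"
    using J by (simp add: if_distrib sum.delta cong: sum.cong)
  finally show "(\<integral>x. (\<Sum>j\<in>J. h j (x j))\<^sup>2 \<partial>PiM UNIV F) = (\<Sum>j\<in>J. \<integral>y. (h j y)\<^sup>2 \<partial>F j)" .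
qed

lemma normal_poly4:
  fixes s \<mu> :: real assumes s: "0 < s"
  shows "has_bochner_integral lborel
    (\<lambda>x. normal_density \<mu> s x * (a0 + a1 * (x - \<mu>) + a2 * (x - \<mu>)^2 + a3 * (x - \<mu>)^3 + a4 * (x - \<mu>)^4))
    (a0 + a2 * s\<^sup>2 + 3 * a4 * s^4)"
proof -
  let ?n = "normal_density \<mu> s"
  have m0: "has_bochner_integral lborel (\<lambda>x. ?n x * (x - \<mu>)^0) 1"
    using normal_moment_even[OF s, of \<mu> 0] by simp
  have m1: "has_bochner_integral lborel (\<lambda>x. ?n x * (x - \<mu>)^1) 0"
    using normal_moment_odd[OF s, of \<mu> 0] by simp
  have m2: "has_bochner_integral lborel (\<lambda>x. ?n x * (x - \<mu>)^2) (s\<^sup>2)"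
    using normal_moment_even[OF s, of \<mu> 1] by simp
  have m3: "has_bochner_integral lborel (\<lambda>x. ?n x * (x - \<mu>)^3) 0"
    using normal_moment_odd[OF s, of \<mu> 1] by (simp add: numeral_3_eq_3)
  have e4: "fact (2 * 2) / ((2 / s\<^sup>2) ^ 2 * fact 2) = 3 * s^4"
    using s by (simp add: fact_numeral field_simps power2_eq_square power3_eq_cube power4_eq_xxxx)
  have m4: "has_bochner_integral lborel (\<lambda>x. ?n x * (x - \<mu>)^4) (3 * s^4)"
    using normal_moment_even[OF s, of \<mu> 2] e4 by simp
  have "has_bochner_integral lborel
    (\<lambda>x. a0 * (?n x * (x - \<mu>)^0) + a1 * (?n x * (x - \<mu>)^1) + a2 * (?n x * (x - \<mu>)^2) + a3 * (?n x * (x - \<mu>)^3) + a4 * (?n x * (x - \<mu>)^4))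
    (a0 * 1 + a1 * 0 + a2 * s\<^sup>2 + a3 * 0 + a4 * (3 * s^4))"
    by (intro has_bochner_integral_add has_bochner_integral_mult_right m0 m1 m2 m3 m4)
  then show ?thesis
    by (rule has_bochner_integral_cong[THEN iffD1, rotated -1]) (auto simp: algebra_simps)
qed

lemma normal_sq_centered:
  fixes s \<mu> c w :: real assumes s: "0 < s"
  defines "F \<equiv> density lborel (normal_density \<mu> s)"
  defines "h \<equiv> (\<lambda>x. w * ((x - c)\<^sup>2 - ((\<mu> - c)\<^sup>2 + s\<^sup>2)))"
  shows "integrable F h" "integrable F (\<lambda>x. (h x)\<^sup>2)" "integral\<^sup>L F h = 0"
    "(\<integral>x. (h x)\<^sup>2 \<partial>F) = w\<^sup>2 * (2 * s^4 + 4 * s\<^sup>2 * (\<mu> - c)\<^sup>2)"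
proof -
  let ?n = "normal_density \<mu> s"
  define d where "d = \<mu> - c"
  have A: "has_bochner_integral lborel (\<lambda>x. ?n x * ((- w * s\<^sup>2) + (2 * w * d) * (x - \<mu>) + w * (x - \<mu>)^2 + 0 * (x - \<mu>)^3 + 0 * (x - \<mu>)^4))
    ((- w * s\<^sup>2) + w * s\<^sup>2 + 3 * 0 * s^4)"
    by (rule normal_poly4[OF s])
  have hA: "has_bochner_integral F h 0"
    unfolding F_def
    by (rule has_bochner_integral_density)
       (auto simp: h_def d_def intro!: has_bochner_integral_cong[THEN iffD1, OF _ _ _ A] simp: algebra_simps power2_eq_square)
  have B: "has_bochner_integral lborel (\<lambda>x. ?n x * (w\<^sup>2 * s^4 + (- 4 * w\<^sup>2 * d * s\<^sup>2) * (x - \<mu>) + (w\<^sup>2 * (4 * d\<^sup>2 - 2 * s\<^sup>2)) * (x - \<mu>)^2 + (4 * w\<^sup>2 * d) * (x - \<mu>)^3 + w\<^sup>2 * (x - \<mu>)^4))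
    (w\<^sup>2 * s^4 + (w\<^sup>2 * (4 * d\<^sup>2 - 2 * s\<^sup>2)) * s\<^sup>2 + 3 * w\<^sup>2 * s^4)"
    by (rule normal_poly4[OF s])
  have hB: "has_bochner_integral F (\<lambda>x. (h x)\<^sup>2) (w\<^sup>2 * (2 * s^4 + 4 * s\<^sup>2 * (\<mu> - c)\<^sup>2))"
    unfolding F_def
    by (rule has_bochner_integral_density)
       (auto simp: h_def d_def intro!: has_bochner_integral_cong[THEN iffD1, OF _ _ _ B] simp: algebra_simps power2_eq_square power3_eq_cube power4_eq_xxxx)
  show "integrable F h" "integrable F (\<lambda>x. (h x)\<^sup>2)" "integral\<^sup>L F h = 0"
    "(\<integral>x. (h x)\<^sup>2 \<partial>F) = w\<^sup>2 * (2 * s^4 + 4 * s\<^sup>2 * (\<mu> - c)\<^sup>2)"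
    using hA hB integrable.intros by (auto dest: has_bochner_integral_integral_eq)
qed

lemma GC:
  fixes F :: "nat \<Rightarrow> real measure" and \<mu> s c w :: "nat \<Rightarrow> real" and J :: "nat set" and t :: real
  assumes P: "\<And>i. prob_space (F i)" and J: "finite J"
    and N: "\<And>j. j \<in> J \<Longrightarrow> F j = density lborel (normal_density (\<mu> j) (s j))"
    and spos: "\<And>j. j \<in> J \<Longrightarrow> 0 < s j"
    and Fsets: "\<And>i. sets (F i) = sets borel"
    and t: "0 < t"
  shows "measure (PiM UNIV F) {x \<in> space (PiM UNIV F). t \<le> \<bar>(\<Sum>j\<in>J. w j * (x j - c j)\<^sup>2) - (\<Sum>j\<in>J. w j * ((\<mu> j - c j)\<^sup>2 + (s j)\<^sup>2))\<bar>}
     \<le> (\<Sum>j\<in>J. (w j)\<^sup>2 * (2 * (s j)^4 + 4 * (s j)\<^sup>2 * (\<mu> j - c j)\<^sup>2)) / t\<^sup>2"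
proof -
  interpret PP: prob_space "PiM UNIV F" by (intro prob_space_PiM P)
  define h where "h = (\<lambda>j x. w j * ((x - c j)\<^sup>2 - ((\<mu> j - c j)\<^sup>2 + (s j)\<^sup>2)))"
  have Sets: "sets (PiM UNIV F) = sets (PiM UNIV (\<lambda>_. borel :: real measure))"
    by (rule sets_PiM_cong) (auto simp: Fsets)
  have meas: "(\<lambda>x. \<Sum>j\<in>J. h j (x j)) \<in> borel_measurable (PiM UNIV F)"
    unfolding measurable_cong_sets[OF Sets refl] h_def by measurable
  have hp: "integrable (F j) (h j)" "integrable (F j) (\<lambda>x. (h j x)\<^sup>2)" "integral\<^sup>L (F j) (h j) = 0"
    "(\<integral>x. (h j x)\<^sup>2 \<partial>F j) = (w j)\<^sup>2 * (2 * (s j)^4 + 4 * (s j)\<^sup>2 * (\<mu> j - c j)\<^sup>2)" if "j \<in> J" for j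
    using normal_sq_centered[OF spos[OF that], of "\<mu> j" "w j" "c j"] N[OF that] unfolding h_def by auto
  have I: "integrable (PiM UNIV F) (\<lambda>x. (\<Sum>j\<in>J. h j (x j))\<^sup>2)"
    and E: "(\<integral>x. (\<Sum>j\<in>J. h j (x j))\<^sup>2 \<partial>PiM UNIV F) = (\<Sum>j\<in>J. \<integral>y. (h j y)\<^sup>2 \<partial>F j)"
    using PiM_UNIV_sum_sq[OF P J, where h=h] hp by auto
  have eq: "(\<Sum>j\<in>J. h j (x j)) = (\<Sum>j\<in>J. w j * (x j - c j)\<^sup>2) - (\<Sum>j\<in>J. w j * ((\<mu> j - c j)\<^sup>2 + (s j)\<^sup>2))" for x
    unfolding h_def by (simp add: right_diff_distrib sum_subtractf)
  have "measure (PiM UNIV F) {x \<in> space (PiM UNIV F). t \<le> \<bar>\<Sum>j\<in>J. h j (x j)\<bar>}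
      \<le> (\<integral>x. (\<Sum>j\<in>J. h j (x j))^2 \<partial>PiM UNIV F) / t\<^sup>2"
    using meas I t by (intro PP.second_moment_method) auto
  also have "\<dots> = (\<Sum>j\<in>J. (w j)\<^sup>2 * (2 * (s j)^4 + 4 * (s j)\<^sup>2 * (\<mu> j - c j)\<^sup>2)) / t\<^sup>2"
    using E hp(4) by simp
  finally show ?thesis unfolding eq .
qed

lemma sq_norm_split:
  fixes v theta eta :: "nat \<Rightarrow> real"
  assumes tail: "\<And>j. m \<le> j \<Longrightarrow> v j = eta j" and sm: "summable (\<lambda>j. (theta j - eta j)\<^sup>2)"
  shows "sq_norm (\<lambda>j. v j - theta j) = (\<Sum>j<m. (v j - theta j)\<^sup>2) + bias theta eta m"
proof -
  have sh: "(\<lambda>j. (v (j + m) - theta (j + m))\<^sup>2) = (\<lambda>j. (theta (j + m) - eta (j + m))\<^sup>2)"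
    using tail by (auto simp: power2_commute)
  have "summable (\<lambda>j. (theta (j + m) - eta (j + m))\<^sup>2)"
    using sm by (subst summable_iff_shift) 
  then have "summable (\<lambda>j. (v (j + m) - theta (j + m))\<^sup>2)" unfolding sh .
  then have s: "summable (\<lambda>j. (v j - theta j)\<^sup>2)"
    by (subst (asm) summable_iff_shift[where f="\<lambda>j. (v j - theta j)\<^sup>2"])
  show ?thesis
    unfolding sq_norm_def bias_def
    using suminf_split_initial_segment[OF s, of m] sh by simp
qed

lemma posterior_bound:
  fixes p \<sigma> theta eta :: "nat \<Rightarrow> real" and m :: nat and t L U :: real
  assumes spos: "\<And>j. j < m \<Longrightarrow> 0 < \<sigma> j"
    and sm: "summable (\<lambda>j. (theta j - eta j)\<^sup>2)"
    and t: "0 < t"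
    and H: "\<And>S. \<bar>S - (\<Sum>j<m. (p j - theta j)\<^sup>2 + \<sigma> j)\<bar> < t \<Longrightarrow> L \<le> S + bias theta eta m \<and> S + bias theta eta m \<le> U"
  defines "G \<equiv> (\<lambda>j. if j < m then density lborel (normal_density (p j) (sqrt (\<sigma> j))) else return borel (eta j))"
  shows "1 - (\<Sum>j<m. 2 * (\<sigma> j)\<^sup>2 + 4 * \<sigma> j * (p j - theta j)\<^sup>2) / t\<^sup>2
    \<le> measure (PiM UNIV G) {v. L \<le> sq_norm (\<lambda>j. v j - theta j) \<and> sq_norm (\<lambda>j. v j - theta j) \<le> U}"
proof -
  have P: "prob_space (G j)" for j
    unfolding G_def using spos by (auto intro!: prob_space_normal_density prob_space_return)
  interpret PP: prob_space "PiM UNIV G" by (intro prob_space_PiM P)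
  have Gsets: "sets (G i) = sets borel" for i by (simp add: G_def)
  have Sets: "sets (PiM UNIV G) = sets (PiM UNIV (\<lambda>_. borel :: real measure))"
    by (rule sets_PiM_cong) (auto simp: Gsets)
  have spc: "space (PiM UNIV G) = UNIV"
  proof -
    have "space (G i) = UNIV" for i by (simp add: G_def)
    then show ?thesis by (simp add: space_PiM PiE_UNIV_domain)
  qed
  define A where "A = {v. L \<le> sq_norm (\<lambda>j. v j - theta j) \<and> sq_norm (\<lambda>j. v j - theta j) \<le> U}"
  define S where "S = (\<lambda>v. \<Sum>j<m. (v j - theta j)\<^sup>2)"
  define \<mu> where "\<mu> = (\<Sum>j<m. (p j - theta j)\<^sup>2 + \<sigma> j)"
  define B where "B = {v \<in> space (PiM UNIV G). t \<le> \<bar>S v - \<mu>\<bar>}"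
  have Ameas: "A \<in> sets (PiM UNIV G)"
  proof -
    have "{v\<in>space (PiM UNIV (\<lambda>_. borel :: real measure)). L \<le> sq_norm (\<lambda>j. v j - theta j) \<and> sq_norm (\<lambda>j. v j - theta j) \<le> U} \<in> sets (PiM UNIV (\<lambda>_. borel :: real measure))"
      unfolding sq_norm_def by measurable
    then show ?thesis unfolding Sets A_def by (simp add: space_PiM)
  qed
  have Bmeas: "B \<in> sets (PiM UNIV G)"
  proof -
    have spc': "space (PiM UNIV (\<lambda>_. borel :: real measure)) = UNIV" by (simp add: space_PiM)
    show ?thesis unfolding B_def Sets spc spc'[symmetric] S_def by measurable
  qed
  have AEtail: "AE v in PiM UNIV G. \<forall>j. m \<le> j \<longrightarrow> v j = eta j"
  proof (subst AE_all_countable, intro allI)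
    fix j
    show "AE v in PiM UNIV G. m \<le> j \<longrightarrow> v j = eta j"
    proof (cases "m \<le> j")
      case True
      have Gj: "G j = return borel (eta j)" using True by (simp add: G_def)
      have "AE x in return borel (eta j). x = eta j" by (subst AE_return) auto
      then have "AE x in G j. x = eta j" unfolding Gj .
      then have "AE v in PiM UNIV G. v j = eta j"
        by (rule AE_PiM_component[OF P, of j UNIV "\<lambda>x. x = eta j", simplified])
      then show ?thesis by simp
    qed simp
  qed
  have AEsub: "AE v in PiM UNIV G. v \<in> space (PiM UNIV G) - B \<longrightarrow> v \<in> A"
    using AEtail
  proof eventually_elim
    case (elim v)
    show ?case
    proof
      assume "v \<in> space (PiM UNIV G) - B"
      then have "\<bar>S v - \<mu>\<bar> < t" by (auto simp: B_def)
      then have "L \<le> S v + bias theta eta m \<and> S v + bias theta eta m \<le> U"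
        using H unfolding \<mu>_def by blast
      moreover have "sq_norm (\<lambda>j. v j - theta j) = S v + bias theta eta m"
        unfolding S_def using elim sm by (intro sq_norm_split) auto
      ultimately show "v \<in> A" by (simp add: A_def)
    qed
  qed
  have gc: "PP.prob {x \<in> space (PiM UNIV G). t \<le> \<bar>(\<Sum>j\<in>{..<m}. 1 * (x j - theta j)\<^sup>2) - (\<Sum>j\<in>{..<m}. 1 * ((p j - theta j)\<^sup>2 + (sqrt (\<sigma> j))\<^sup>2))\<bar>}
     \<le> (\<Sum>j\<in>{..<m}. (1::real)\<^sup>2 * (2 * (sqrt (\<sigma> j))^4 + 4 * (sqrt (\<sigma> j))\<^sup>2 * (p j - theta j)\<^sup>2)) / t\<^sup>2"
    by (rule GC[where F=G and J="{..<m}" and \<mu>=p and s="\<lambda>j. sqrt (\<sigma> j)" and t=t and w="\<lambda>_. 1" and c=theta])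
       (use P spos t Gsets in \<open>auto simp: G_def\<close>)
  have mu_eq: "(\<Sum>j\<in>{..<m}. 1 * ((p j - theta j)\<^sup>2 + (sqrt (\<sigma> j))\<^sup>2)) = \<mu>"
    unfolding \<mu>_def using spos by (intro sum.cong) (auto simp: less_imp_le)
  have "PP.prob B \<le> (\<Sum>j<m. (1::real)\<^sup>2 * (2 * (sqrt (\<sigma> j))^4 + 4 * (sqrt (\<sigma> j))\<^sup>2 * (p j - theta j)\<^sup>2)) / t\<^sup>2"
    using gc unfolding mu_eq B_def S_def by simp
  also have "(\<Sum>j<m. (1::real)\<^sup>2 * (2 * (sqrt (\<sigma> j))^4 + 4 * (sqrt (\<sigma> j))\<^sup>2 * (p j - theta j)\<^sup>2))
      = (\<Sum>j<m. 2 * (\<sigma> j)\<^sup>2 + 4 * \<sigma> j * (p j - theta j)\<^sup>2)"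
  proof (rule sum.cong[OF refl])
    fix j assume "j \<in> {..<m}"
    then have "0 < \<sigma> j" using spos by auto
    moreover have "(sqrt (\<sigma> j))^4 = ((sqrt (\<sigma> j))\<^sup>2)\<^sup>2" by simp
    ultimately show "(1::real)\<^sup>2 * (2 * (sqrt (\<sigma> j))^4 + 4 * (sqrt (\<sigma> j))\<^sup>2 * (p j - theta j)\<^sup>2) = 2 * (\<sigma> j)\<^sup>2 + 4 * \<sigma> j * (p j - theta j)\<^sup>2"
      by (simp del: power_even_eq)
  qed
  finally have PB: "PP.prob B \<le> (\<Sum>j<m. 2 * (\<sigma> j)\<^sup>2 + 4 * \<sigma> j * (p j - theta j)\<^sup>2) / t\<^sup>2" .
  have "PP.prob (space (PiM UNIV G) - B) \<le> PP.prob A"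
    by (rule PP.finite_measure_mono_AE[OF AEsub Ameas])
  moreover have "PP.prob (space (PiM UNIV G) - B) = 1 - PP.prob B"
    by (rule PP.prob_compl[OF Bmeas])
  ultimately show ?thesis using PB unfolding A_def by simp
qed

lemma normal_shift:
  fixes \<mu> \<delta> s :: real
  shows "density lborel (normal_density (\<mu> + \<delta>) s) = distr (density lborel (normal_density \<mu> s)) borel (\<lambda>x. x + \<delta>)"
proof (rule measure_eqI)
  show "sets (density lborel (normal_density (\<mu> + \<delta>) s)) = sets (distr (density lborel (normal_density \<mu> s)) borel (\<lambda>x. x + \<delta>))"
    by simp
next
  fix A assume A: "A \<in> sets (density lborel (normal_density (\<mu> + \<delta>) s))"
  then have A': "A \<in> sets borel" by simp
  have "emeasure (density lborel (normal_density (\<mu> + \<delta>) s)) A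
      = (\<integral>\<^sup>+x. ennreal (normal_density (\<mu> + \<delta>) s x) * indicator A x \<partial>lborel)"
    using A' by (simp add: emeasure_density)
  also have "\<dots> = (\<integral>\<^sup>+x. ennreal (normal_density \<mu> s x) * indicator ((\<lambda>x. x + \<delta>) -` A) x \<partial>lborel)"
    using A' by (subst nn_integral_real_affine[where c=1 and t=\<delta>])
      (auto intro!: nn_integral_cong simp: normal_density_def indicator_def algebra_simps)
  also have "\<dots> = emeasure (density lborel (normal_density \<mu> s)) ((\<lambda>x. x + \<delta>) -` A)"
  proof -
    have "(\<lambda>x::real. x + \<delta>) -` A \<inter> space borel \<in> sets borel"
      using A' by (intro measurable_sets[of _ borel borel]) auto
    then show ?thesis by (subst emeasure_density) auto
  qed
  also have "\<dots> = emeasure (distr (density lborel (normal_density \<mu> s)) borel (\<lambda>x. x + \<delta>)) A"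
    using A' by (subst emeasure_distr) auto
  finally show "emeasure (density lborel (normal_density (\<mu> + \<delta>) s)) A = emeasure (distr (density lborel (normal_density \<mu> s)) borel (\<lambda>x. x + \<delta>)) A" .
qed

lemma pre_shift_borel: "A \<in> sets borel \<Longrightarrow> (\<lambda>x::real. x + d) -` A \<in> sets borel"
  using measurable_sets[of "\<lambda>x::real. x + d" borel borel A] by simp

lemma PiM_shift:
  fixes H H0 :: "nat \<Rightarrow> real measure" and \<delta> :: "nat \<Rightarrow> real"
  assumes P0: "\<And>i. prob_space (H0 i)"
    and S0: "\<And>i. sets (H0 i) = sets borel"
    and HH: "\<And>i. H i = distr (H0 i) borel (\<lambda>x. x + \<delta> i)"
  shows "PiM UNIV H = distr (PiM UNIV H0) (PiM UNIV H) (\<lambda>z j. z j + \<delta> j)"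
proof -
  have gm: "(\<lambda>x. x + \<delta> i) \<in> measurable (H0 i) borel" for i
    unfolding measurable_cong_sets[OF S0 refl] by simp
  have P: "prob_space (H i)" for i unfolding HH by (intro prob_space.prob_space_distr P0 gm)
  interpret Hp: product_prob_space H UNIV by (intro product_prob_spaceI P)
  interpret H0p: product_prob_space H0 UNIV by (intro product_prob_spaceI P0)
  have Ssets: "sets (H i) = sets borel" for i unfolding HH by simp
  have SP: "sets (PiM UNIV H) = sets (PiM UNIV (\<lambda>_. borel :: real measure))"
    by (rule sets_PiM_cong) (auto simp: Ssets)
  have SP0: "sets (PiM UNIV H0) = sets (PiM UNIV (\<lambda>_. borel :: real measure))"
    by (rule sets_PiM_cong) (auto simp: S0)
  have sp: "space (H i) = UNIV" for i using sets_eq_imp_space_eq[OF Ssets[of i]] by simp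
  have sp0: "space (H0 i) = UNIV" for i using sets_eq_imp_space_eq[OF S0[of i]] by simp
  have spP: "space (PiM UNIV H) = UNIV" by (simp add: space_PiM sp PiE_UNIV_domain)
  have spP0: "space (PiM UNIV H0) = UNIV" by (simp add: space_PiM sp0 PiE_UNIV_domain)
  have g: "(\<lambda>z j. z j + \<delta> j) \<in> measurable (PiM UNIV H0) (PiM UNIV H)"
    unfolding measurable_cong_sets[OF SP0 SP] by (rule measurable_PiM_single') (auto simp: space_PiM)
  show ?thesis
  proof (rule Hp.PiM_eq[symmetric])
    show "sets (distr (PiM UNIV H0) (PiM UNIV H) (\<lambda>z j. z j + \<delta> j)) = sets (PiM UNIV H)" by simp
  next
    fix J F assume J: "finite J" "J \<subseteq> UNIV" and F: "\<And>j. j \<in> J \<Longrightarrow> F j \<in> sets (H j)"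
    have F': "\<And>j. j \<in> J \<Longrightarrow> F j \<in> sets borel" using F Ssets by auto
    have emb: "prod_emb UNIV H J (Pi\<^sub>E J F) \<in> sets (PiM UNIV H)"
      using J F by (intro measurable_prod_emb sets_PiM_I_finite) auto
    have pre: "(\<lambda>z j. z j + \<delta> j) -` prod_emb UNIV H J (Pi\<^sub>E J F) \<inter> space (PiM UNIV H0)
       = prod_emb UNIV H0 J (Pi\<^sub>E J (\<lambda>j. (\<lambda>x. x + \<delta> j) -` F j))"
      by (auto simp: prod_emb_def spP spP0 space_PiM sp sp0 PiE_UNIV_domain Pi_iff)
    have "emeasure (distr (PiM UNIV H0) (PiM UNIV H) (\<lambda>z j. z j + \<delta> j)) (prod_emb UNIV H J (Pi\<^sub>E J F))
      = emeasure (PiM UNIV H0) (prod_emb UNIV H0 J (Pi\<^sub>E J (\<lambda>j. (\<lambda>x. x + \<delta> j) -` F j)))"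
      by (subst emeasure_distr[OF g emb]) (simp add: pre)
    also have "\<dots> = (\<Prod>j\<in>J. emeasure (H0 j) ((\<lambda>x. x + \<delta> j) -` F j))"
      using J F' by (intro H0p.emeasure_PiM_emb) (auto simp: S0 pre_shift_borel)
    also have "\<dots> = (\<Prod>j\<in>J. emeasure (H j) (F j))"
      using F' gm by (intro prod.cong refl) (auto simp: HH emeasure_distr sp0)
    finally show "emeasure (distr (PiM UNIV H0) (PiM UNIV H) (\<lambda>z j. z j + \<delta> j)) (prod_emb UNIV H J (Pi\<^sub>E J F)) = (\<Prod>j\<in>J. emeasure (H j) (F j))" .
  qed
qed

lemma posterior_measurable:
  fixes N :: "(nat \<Rightarrow> real) measure" and \<alpha> \<beta> \<sigma> eta :: "nat \<Rightarrow> real" and m :: nat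
    and A :: "(nat \<Rightarrow> real) set"
  assumes NS: "sets N = sets (PiM UNIV (\<lambda>_. borel :: real measure))"
    and A: "A \<in> sets (PiM UNIV (\<lambda>_. borel :: real measure))"
    and spos: "\<And>j. j < m \<Longrightarrow> 0 < \<sigma> j"
  shows "(\<lambda>Y. measure (PiM UNIV (\<lambda>j. if j < m then density lborel (normal_density (\<beta> j + \<alpha> j * Y j) (sqrt (\<sigma> j))) else return borel (eta j))) A) \<in> borel_measurable N"
proof -
  define G where "G = (\<lambda>(Y::nat\<Rightarrow>real) j. if j < m then density lborel (normal_density (\<beta> j + \<alpha> j * Y j) (sqrt (\<sigma> j))) else return borel (eta j))"
  define G0 where "G0 = G (\<lambda>_. 0)"
  define \<delta> where "\<delta> = (\<lambda>(Y::nat\<Rightarrow>real) j. if j < m then \<alpha> j * Y j else 0)"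
  define g where "g = (\<lambda>(Y::nat\<Rightarrow>real) (z::nat\<Rightarrow>real) j. z j + \<delta> Y j)"
  have P0: "prob_space (G0 i)" for i
    unfolding G0_def G_def using spos by (auto intro!: prob_space_normal_density prob_space_return)
  have S0: "sets (G0 i) = sets borel" for i unfolding G0_def G_def by simp
  have GG: "G Y j = distr (G0 j) borel (\<lambda>x. x + \<delta> Y j)" for Y j
  proof (cases "j < m")
    case True
    then show ?thesis
      using normal_shift[of "\<beta> j" "\<alpha> j * Y j" "sqrt (\<sigma> j)"]
      by (simp add: G0_def G_def \<delta>_def)
  next
    case False
    then show ?thesis
      by (simp add: G0_def G_def \<delta>_def distr_return)
  qed
  have PiG: "PiM UNIV (G Y) = distr (PiM UNIV G0) (PiM UNIV (G Y)) (g Y)" for Y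
    unfolding g_def by (rule PiM_shift[OF P0 S0 GG])
  have SG: "sets (PiM UNIV (G Y)) = sets (PiM UNIV (\<lambda>_. borel :: real measure))" for Y
    by (rule sets_PiM_cong) (auto simp: G_def)
  have SG0: "sets (PiM UNIV G0) = sets (PiM UNIV (\<lambda>_. borel :: real measure))"
    by (rule sets_PiM_cong) (auto simp: S0)
  have spG0: "space (PiM UNIV G0) = UNIV"
    using sets_eq_imp_space_eq[OF SG0] by (simp add: space_PiM PiE_UNIV_domain)
  have spN: "space N = UNIV"
    using sets_eq_imp_space_eq[OF NS] by (simp add: space_PiM PiE_UNIV_domain)
  have gm: "g Y \<in> measurable (PiM UNIV G0) (PiM UNIV (G Y))" for Y
    unfolding measurable_cong_sets[OF SG0 SG] g_def by (rule measurable_PiM_single') (auto simp: space_PiM)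
  have AG: "A \<in> sets (PiM UNIV (G Y))" for Y using A SG by simp
  have eq1: "measure (PiM UNIV (G Y)) A = measure (PiM UNIV G0) {z. g Y z \<in> A}" for Y
    by (subst PiG, subst measure_distr[OF gm AG]) (simp add: spG0 vimage_def)
  define Q where "Q = {p \<in> space (N \<Otimes>\<^sub>M PiM UNIV G0). g (fst p) (snd p) \<in> A}"
  have SQ: "sets (N \<Otimes>\<^sub>M PiM UNIV G0) = sets (PiM UNIV (\<lambda>_. borel :: real measure) \<Otimes>\<^sub>M PiM UNIV (\<lambda>_. borel :: real measure))"
    by (rule sets_pair_measure_cong[OF NS SG0])
  have gpm: "(\<lambda>p. g (fst p) (snd p)) \<in> measurable (PiM UNIV (\<lambda>_. borel :: real measure) \<Otimes>\<^sub>M PiM UNIV (\<lambda>_. borel :: real measure)) (PiM UNIV (\<lambda>_. borel :: real measure))"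
    unfolding g_def \<delta>_def by (rule measurable_PiM_single') (auto simp: space_PiM)
  have Qs: "Q \<in> sets (N \<Otimes>\<^sub>M PiM UNIV G0)"
  proof -
    have "(\<lambda>p. g (fst p) (snd p)) -` A \<inter> space (N \<Otimes>\<^sub>M PiM UNIV G0) \<in> sets (N \<Otimes>\<^sub>M PiM UNIV G0)"
    proof -
      have gpm': "(\<lambda>p. g (fst p) (snd p)) \<in> measurable (N \<Otimes>\<^sub>M PiM UNIV G0) (PiM UNIV (\<lambda>_. borel :: real measure))"
        unfolding measurable_cong_sets[OF SQ refl] by (rule gpm)
      show ?thesis by (rule measurable_sets[OF gpm' A])
    qed
    then show ?thesis unfolding Q_def by (simp add: vimage_def Int_def conj_commute)
  qed
  interpret Z: prob_space "PiM UNIV G0" by (intro prob_space_PiM P0)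
  have "(\<lambda>Y. emeasure (PiM UNIV G0) (Pair Y -` Q)) \<in> borel_measurable N"
    by (rule Z.measurable_emeasure_Pair[OF Qs])
  moreover have "Pair Y -` Q = {z. g Y z \<in> A}" for Y
    by (auto simp: Q_def space_pair_measure spN spG0)
  ultimately have "(\<lambda>Y. emeasure (PiM UNIV G0) {z. g Y z \<in> A}) \<in> borel_measurable N" by simp
  then have "(\<lambda>Y. measure (PiM UNIV G0) {z. g Y z \<in> A}) \<in> borel_measurable N"
    unfolding measure_def by (rule borel_measurable_enn2real)
  then show ?thesis using eq1 unfolding G_def by simp
qed

lemma coord_alg:
  fixes l th et e ta y :: real
  assumes e: "0 < e" and ta: "0 < ta" and l: "l \<noteq> 0"
  defines "s \<equiv> inverse (l\<^sup>2 / e + inverse ta)"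
  defines "a \<equiv> s * l / e"
  defines "c \<equiv> (th - s * et / ta) / a"
  shows "0 < s" "a \<noteq> 0"
    "s * (et / ta + l * y / e) - th = a * (y - c)"
    "a\<^sup>2 * ((l * th - c)\<^sup>2 + (sqrt e)\<^sup>2) = s\<^sup>2 / ta\<^sup>2 * (et - th)\<^sup>2 + s\<^sup>2 * l\<^sup>2 / e"
    "(a\<^sup>2)\<^sup>2 * (2 * (sqrt e)^4 + 4 * (sqrt e)\<^sup>2 * (l * th - c)\<^sup>2) = 2 * (s\<^sup>2 * l\<^sup>2 / e)\<^sup>2 + 4 * (s\<^sup>2 * l\<^sup>2 / e) * (s\<^sup>2 / ta\<^sup>2 * (et - th)\<^sup>2)"
    "s\<^sup>2 * l\<^sup>2 / e \<le> s"
    "s * (et / ta + l * y / e) = s * et / ta + a * y"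
proof -
  have X: "0 < l\<^sup>2 / e + inverse ta" using e ta l by (simp add: add_nonneg_pos)
  show sp: "0 < s" unfolding s_def using X by simp
  show an: "a \<noteq> 0" unfolding a_def using sp e l by simp
  have key: "s * (l\<^sup>2 / e + inverse ta) = 1" unfolding s_def using X by simp
  have key2: "s * l\<^sup>2 / e = 1 - s / ta" using key by (simp add: field_simps)
  have ac: "a * c = th - s * et / ta" unfolding c_def using an by simp
  show lin: "s * (et / ta + l * y / e) = s * et / ta + a * y"
    unfolding a_def by (simp add: field_simps)
  show "s * (et / ta + l * y / e) - th = a * (y - c)"
    using ac lin by (simp add: right_diff_distrib)
  have al: "a * (l * th - c) = s * (et - th) / ta"
  proof -
    have "a * (l * th - c) = a * l * th - a * c" by (simp add: algebra_simps)
    also have "a * l * th = (s * l\<^sup>2 / e) * th" unfolding a_def by (simp add: power2_eq_square)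
    finally have "a * (l * th - c) = (1 - s / ta) * th - (th - s * et / ta)"
      using ac key2 by simp
    also have "\<dots> = s * et / ta - s * th / ta" by (simp add: left_diff_distrib)
    also have "\<dots> = s * (et - th) / ta" by (simp add: right_diff_distrib diff_divide_distrib)
    finally show ?thesis .
  qed
  have ae: "a\<^sup>2 * e = s\<^sup>2 * l\<^sup>2 / e" unfolding a_def using e by (simp add: field_simps power2_eq_square)
  have se: "(sqrt e)\<^sup>2 = e" using e by simp
  have se4: "(sqrt e)^4 = e\<^sup>2"
  proof -
    have "(sqrt e)^4 = ((sqrt e)\<^sup>2)\<^sup>2" by (simp flip: power_mult)
    then show ?thesis using se by simp
  qed
  have al2: "a\<^sup>2 * (l * th - c)\<^sup>2 = s\<^sup>2 / ta\<^sup>2 * (et - th)\<^sup>2"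
  proof -
    have "(a * (l * th - c))\<^sup>2 = (s * (et - th) / ta)\<^sup>2" using al by simp
    then show ?thesis by (simp only: power_mult_distrib power_divide times_divide_eq_left)
  qed
  show "a\<^sup>2 * ((l * th - c)\<^sup>2 + (sqrt e)\<^sup>2) = s\<^sup>2 / ta\<^sup>2 * (et - th)\<^sup>2 + s\<^sup>2 * l\<^sup>2 / e"
    using al2 ae se by (simp add: distrib_left)
  show "(a\<^sup>2)\<^sup>2 * (2 * (sqrt e)^4 + 4 * (sqrt e)\<^sup>2 * (l * th - c)\<^sup>2) = 2 * (s\<^sup>2 * l\<^sup>2 / e)\<^sup>2 + 4 * (s\<^sup>2 * l\<^sup>2 / e) * (s\<^sup>2 / ta\<^sup>2 * (et - th)\<^sup>2)"
  proof -
    have "(a\<^sup>2)\<^sup>2 * (2 * (sqrt e)^4 + 4 * (sqrt e)\<^sup>2 * (l * th - c)\<^sup>2) = 2 * (a\<^sup>2 * e)\<^sup>2 + 4 * (a\<^sup>2 * e) * (a\<^sup>2 * (l * th - c)\<^sup>2)"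
      unfolding se4 se by (simp add: algebra_simps power2_eq_square)
    then show ?thesis unfolding ae al2 .
  qed
  show "s\<^sup>2 * l\<^sup>2 / e \<le> s"
  proof -
    have "s * l\<^sup>2 / e \<le> 1" using key2 sp ta by simp
    then have "s * (s * l\<^sup>2 / e) \<le> s * 1" using sp by (intro mult_left_mono) auto
    then show ?thesis by (simp add: power2_eq_square)
  qed
qed

lemma sets_Collect_PiM_borel:
  assumes "Measurable.pred (PiM UNIV (\<lambda>_. borel :: real measure)) P"
    and "sets N = sets (PiM UNIV (\<lambda>_. borel :: real measure))"
  shows "{Y \<in> UNIV. P Y} \<in> sets N"
proof -
  have "{Y \<in> space (PiM UNIV (\<lambda>_. borel :: real measure)). P Y} \<in> sets (PiM UNIV (\<lambda>_. borel :: real measure))"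
    using assms(1) by measurable
  then show ?thesis using assms(2) by (simp add: space_PiM)
qed

lemma eps_bound:
  fixes lam theta eta tau' :: "nat \<Rightarrow> real" and eps K :: real and m :: nat
  assumes e: "0 < eps" and m1: "1 \<le> m" and tpos: "\<And>j. 0 < tau' j" and lam_nz: "\<And>j. lam j \<noteq> 0"
    and diff_l2: "summable (\<lambda>j. (theta j - eta j)\<^sup>2)" and K1: "1 \<le> K"
    and Pk: "max (rterm lam theta eta eps tau' m) (real m * sigma_max lam eps tau' m) / max (bias theta eta m) (sigma_bar lam eps tau' m) \<le> K"
  defines "M \<equiv> max (bias theta eta m) (sigma_bar lam eps tau' m)"
  defines "A \<equiv> {v. inverse (10 * K) * M \<le> sq_norm (\<lambda>j. v j - theta j) \<and> sq_norm (\<lambda>j. v j - theta j) \<le> 10 * K * M}"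
  shows "1 - (4 * K * (4 * K + 10) + K * (2 + 4 * K)) / real m \<le> (\<integral>Y. measure (sieve_posterior lam eta eps tau' m Y) A \<partial>data_law lam theta eps)"
    and "(\<integral>Y. measure (sieve_posterior lam eta eps tau' m Y) A \<partial>data_law lam theta eps) \<le> 1"
proof -
  define \<sigma> where "\<sigma> = post_var lam eps tau'"
  define sb where "sb = sigma_bar lam eps tau' m"
  define b where "b = bias theta eta m"
  define r where "r = rterm lam theta eta eps tau' m"
  define smax where "smax = sigma_max lam eps tau' m"
  define a where "a = (\<lambda>j. \<sigma> j * lam j / eps)"
  define c where "c = (\<lambda>j. (theta j - \<sigma> j * eta j / tau' j) / a j)"
  define pm where "pm = (\<lambda>Y j. post_mean lam eta eps tau' Y j)"
  define D where "D = (\<lambda>Y. \<Sum>j<m. (pm Y j - theta j)\<^sup>2)"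
  define q where "q = (\<lambda>j. (\<sigma> j)\<^sup>2 * (lam j)\<^sup>2 / eps)"
  define \<rho> where "\<rho> = (\<lambda>j. (\<sigma> j)\<^sup>2 / (tau' j)\<^sup>2 * (eta j - theta j)\<^sup>2)"
  have spos: "0 < \<sigma> j" for j unfolding \<sigma>_def post_var_def using coord_alg(1)[where l="lam j" and e=eps and ta="tau' j", OF e tpos[of j] lam_nz[of j]] .
  have CA3: "pm Y j - theta j = a j * (Y j - c j)" for Y j
    using coord_alg(3)[where l="lam j" and e=eps and ta="tau' j" and th="theta j" and et="eta j" and y="Y j", OF e tpos[of j] lam_nz[of j]] unfolding pm_def post_mean_def a_def c_def \<sigma>_def post_var_def by simp
  have CA4: "(a j)\<^sup>2 * ((lam j * theta j - c j)\<^sup>2 + (sqrt eps)\<^sup>2) = \<rho> j + q j" for j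
    using coord_alg(4)[where l="lam j" and e=eps and ta="tau' j" and th="theta j" and et="eta j", OF e tpos[of j] lam_nz[of j]] unfolding \<rho>_def q_def a_def c_def \<sigma>_def post_var_def by simp
  have CA5: "((a j)\<^sup>2)\<^sup>2 * (2 * (sqrt eps)^4 + 4 * (sqrt eps)\<^sup>2 * (lam j * theta j - c j)\<^sup>2) = 2 * (q j)\<^sup>2 + 4 * q j * \<rho> j" for j
    using coord_alg(5)[where l="lam j" and e=eps and ta="tau' j" and th="theta j" and et="eta j", OF e tpos[of j] lam_nz[of j]] unfolding \<rho>_def q_def a_def c_def \<sigma>_def post_var_def by simp
  have CA6: "q j \<le> \<sigma> j" for j
    using coord_alg(6)[where l="lam j" and e=eps and ta="tau' j", OF e tpos[of j] lam_nz[of j]] unfolding q_def \<sigma>_def post_var_def by simp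
  have CA7: "pm Y j = \<sigma> j * eta j / tau' j + a j * Y j" for Y j
    using coord_alg(7)[where l="lam j" and e=eps and ta="tau' j" and et="eta j" and y="Y j", OF e tpos[of j] lam_nz[of j]] unfolding pm_def post_mean_def a_def \<sigma>_def post_var_def by simp
  have qnn: "0 \<le> q j" for j unfolding q_def using e by simp
  have rhonn: "0 \<le> \<rho> j" for j unfolding \<rho>_def by simp
  have sbpos: "0 < sb"
    unfolding sb_def sigma_bar_def \<sigma>_def[symmetric] using m1 spos
    by (intro sum_pos) (auto simp: lessThan_empty_iff)
  have Mge: "b \<le> M" "sb \<le> M" unfolding M_def b_def sb_def by auto
  have Mpos: "0 < M" using sbpos Mge by linarith
  have smax_ge: "\<sigma> j \<le> smax" if "j < m" for j
    unfolding smax_def sigma_max_def \<sigma>_def[symmetric] using that by (intro Max_ge) auto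
  have smax_nn: "0 \<le> smax"
    unfolding smax_def sigma_max_def by (intro Max_ge) auto
  have PK2: "max r (real m * smax) \<le> K * M"
    using Pk Mpos unfolding r_def smax_def M_def by (simp add: pos_divide_le_eq)
  have rK: "r \<le> K * M" and smK: "real m * smax \<le> K * M" using PK2 by auto
  have r_eq: "r = (\<Sum>j<m. \<rho> j)" unfolding r_def rterm_def \<rho>_def \<sigma>_def ..
  have sb_eq: "sb = (\<Sum>j<m. \<sigma> j)" unfolding sb_def sigma_bar_def \<sigma>_def ..
  define Dt where "Dt = data_law lam theta eps"
  define f where "f = (\<lambda>Y. measure (sieve_posterior lam eta eps tau' m Y) A)"
  define C1 where "C1 = 4 * K * (4 * K + 10)"
  define C2 where "C2 = K * (2 + 4 * K)"
  have mpos: "0 < real m" using m1 by simp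
  have KM: "M \<le> K * M" using K1 Mpos by simp
  have bnn: "0 \<le> b" unfolding b_def bias_def by (intro suminf_nonneg) (auto intro: summable_ignore_initial_segment diff_l2)
  have Dnn: "0 \<le> D Y" for Y unfolding D_def by (intro sum_nonneg) auto
  
  have fY: "1 - C1 / real m \<le> f Y" if DY: "D Y < (K + 2) * M" for Y
  proof -
    define V where "V = (\<Sum>j<m. 2 * (\<sigma> j)\<^sup>2 + 4 * \<sigma> j * (pm Y j - theta j)\<^sup>2)"
    have H: "inverse (10 * K) * M \<le> S + bias theta eta m \<and> S + bias theta eta m \<le> 10 * K * M"
      if "\<bar>S - (\<Sum>j<m. (pm Y j - theta j)\<^sup>2 + \<sigma> j)\<bar> < M / 2" for S
    proof -
      have sum_eq: "(\<Sum>j<m. (pm Y j - theta j)\<^sup>2 + \<sigma> j) = D Y + sb"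
        unfolding D_def sb_eq by (simp add: sum.distrib)
      have s1: "\<bar>S - (D Y + sb)\<bar> < M / 2" using that sum_eq by simp
      have bsb: "M \<le> b + sb" unfolding M_def b_def[symmetric] sb_def[symmetric] using sbpos bnn by (simp add: max_def)
      have inv: "inverse (10 * K) * M \<le> M / 2"
      proof -
        have "inverse (10 * K) \<le> inverse 2" using K1 by (intro le_imp_inverse_le) auto
        then have "inverse (10 * K) \<le> 1 / 2" by (simp add: inverse_eq_divide)
        then show ?thesis using Mpos by (simp add: mult_right_mono)
      qed
      have "M / 2 \<le> S + b" using s1 Dnn[of Y] bsb by linarith
      moreover have "S + b \<le> 10 * K * M"
      proof -
        have "S + b \<le> (K + 2) * M + sb + M / 2 + b" using s1 DY by linarith
        also have "\<dots> \<le> K * M + 4.5 * M" using Mge by (simp add: algebra_simps)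
        also have "\<dots> \<le> 10 * K * M" using KM Mpos by linarith
        finally show ?thesis .
      qed
      ultimately show ?thesis using inv unfolding b_def by linarith
    qed
    have pb: "1 - V / (M / 2)\<^sup>2 \<le> measure (PiM UNIV (\<lambda>j. if j < m then density lborel (normal_density (pm Y j) (sqrt (\<sigma> j))) else return borel (eta j)))
        {v. inverse (10 * K) * M \<le> sq_norm (\<lambda>j. v j - theta j) \<and> sq_norm (\<lambda>j. v j - theta j) \<le> 10 * K * M}"
      unfolding V_def using Mpos spos H diff_l2
      by (intro posterior_bound) auto
    have feq: "f Y = measure (PiM UNIV (\<lambda>j. if j < m then density lborel (normal_density (pm Y j) (sqrt (\<sigma> j))) else return borel (eta j)))
        {v. inverse (10 * K) * M \<le> sq_norm (\<lambda>j. v j - theta j) \<and> sq_norm (\<lambda>j. v j - theta j) \<le> 10 * K * M}"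
      unfolding f_def sieve_posterior_def \<sigma>_def pm_def A_def ..
    have V1: "(\<Sum>j<m. 2 * (\<sigma> j)\<^sup>2) \<le> 2 * smax * sb"
    proof -
      have "(\<Sum>j<m. 2 * (\<sigma> j)\<^sup>2) \<le> (\<Sum>j<m. 2 * smax * \<sigma> j)"
      proof (rule sum_mono)
        fix j assume "j \<in> {..<m}"
        then have "\<sigma> j \<le> smax" using smax_ge by auto
        then have "\<sigma> j * \<sigma> j \<le> smax * \<sigma> j" using spos[of j] by (intro mult_right_mono) auto
        then show "2 * (\<sigma> j)\<^sup>2 \<le> 2 * smax * \<sigma> j" by (simp add: power2_eq_square)
      qed
      also have "\<dots> = 2 * smax * sb" unfolding sb_eq by (simp add: sum_distrib_left)
      finally show ?thesis .
    qed
    have V2: "(\<Sum>j<m. 4 * \<sigma> j * (pm Y j - theta j)\<^sup>2) \<le> 4 * smax * D Y"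
    proof -
      have "(\<Sum>j<m. 4 * \<sigma> j * (pm Y j - theta j)\<^sup>2) \<le> (\<Sum>j<m. 4 * smax * (pm Y j - theta j)\<^sup>2)"
      proof (rule sum_mono)
        fix j assume "j \<in> {..<m}"
        then have "\<sigma> j \<le> smax" using smax_ge by auto
        then show "4 * \<sigma> j * (pm Y j - theta j)\<^sup>2 \<le> 4 * smax * (pm Y j - theta j)\<^sup>2"
          by (intro mult_right_mono) auto
      qed
      also have "\<dots> = 4 * smax * D Y" unfolding D_def by (simp add: sum_distrib_left)
      finally show ?thesis .
    qed
    have V3: "V \<le> smax * (M * (4 * K + 10))"
    proof -
      have "V \<le> 2 * smax * sb + 4 * smax * D Y" unfolding V_def using V1 V2 by (simp add: sum.distrib)
      also have "\<dots> \<le> 2 * smax * M + 4 * smax * ((K + 2) * M)"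
        using Mge smax_nn DY by (intro add_mono mult_left_mono) auto
      also have "\<dots> = smax * (M * (4 * K + 10))" by (simp add: algebra_simps)
      finally show ?thesis .
    qed
    have "V * real m \<le> smax * (M * (4 * K + 10)) * real m" using V3 by (intro mult_right_mono) auto
    also have "\<dots> = (real m * smax) * (M * (4 * K + 10))" by simp
    also have "\<dots> \<le> (K * M) * (M * (4 * K + 10))" using smK Mpos K1 by (intro mult_right_mono) auto
    also have "\<dots> = C1 * (M / 2)\<^sup>2" unfolding C1_def by (simp add: power2_eq_square)
    finally have "V * real m \<le> C1 * (M / 2)\<^sup>2" .
    then have "V / (M / 2)\<^sup>2 \<le> C1 / real m" using mpos Mpos by (simp add: field_simps)
    then show ?thesis using pb feq by simp
  qed
  
  define F where "F = (\<lambda>j. density lborel (normal_density (lam j * theta j) (sqrt eps)))"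
  have Dt_eq: "Dt = PiM UNIV F" unfolding Dt_def data_law_def F_def ..
  have PF: "prob_space (F j)" for j unfolding F_def using e by (intro prob_space_normal_density) simp
  have SF: "sets (F j) = sets borel" for j unfolding F_def by simp
  have SDt: "sets Dt = sets (PiM UNIV (\<lambda>_. borel :: real measure))"
    unfolding Dt_eq by (rule sets_PiM_cong) (auto simp: SF)
  have spDt: "space Dt = UNIV"
    using sets_eq_imp_space_eq[OF SDt] by (simp add: space_PiM PiE_UNIV_domain)
  interpret DP: prob_space Dt unfolding Dt_eq by (intro prob_space_PiM PF)
  define B where "B = {Y \<in> space Dt. (K + 2) * M \<le> D Y}"
  define B' where "B' = {Y \<in> space Dt. M \<le> \<bar>(\<Sum>j\<in>{..<m}. (a j)\<^sup>2 * (Y j - c j)\<^sup>2) - (\<Sum>j\<in>{..<m}. (a j)\<^sup>2 * ((lam j * theta j - c j)\<^sup>2 + (sqrt eps)\<^sup>2))\<bar>}"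
  have DY: "D Y = (\<Sum>j\<in>{..<m}. (a j)\<^sup>2 * (Y j - c j)\<^sup>2)" for Y
    unfolding D_def using CA3 by (simp add: power_mult_distrib)
  have ET: "(\<Sum>j\<in>{..<m}. (a j)\<^sup>2 * ((lam j * theta j - c j)\<^sup>2 + (sqrt eps)\<^sup>2)) = r + (\<Sum>j<m. q j)"
    unfolding r_eq using CA4 by (simp add: sum.distrib)
  have Qsb: "(\<Sum>j<m. q j) \<le> sb" unfolding sb_eq using CA6 by (intro sum_mono) auto
  have Bmeas: "B \<in> sets Dt"
    unfolding B_def spDt D_def pm_def post_mean_def
    by (rule sets_Collect_PiM_borel[OF _ SDt]) measurable
  have gc: "measure Dt B' \<le> (\<Sum>j\<in>{..<m}. ((a j)\<^sup>2)\<^sup>2 * (2 * (sqrt eps)^4 + 4 * (sqrt eps)\<^sup>2 * (lam j * theta j - c j)\<^sup>2)) / M\<^sup>2"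
    unfolding B'_def Dt_eq
    by (rule GC[where F=F and J="{..<m}" and \<mu>="\<lambda>j. lam j * theta j" and s="\<lambda>_. sqrt eps" and t=M and w="\<lambda>j. (a j)\<^sup>2" and c=c])
       (use PF SF Mpos e in \<open>auto simp: F_def\<close>)
  have BB': "B \<subseteq> B'"
  proof
    fix Y assume "Y \<in> B"
    then have Y: "Y \<in> space Dt" "(K + 2) * M \<le> D Y" by (auto simp: B_def)
    have "(K + 2) * M = K * M + 2 * M" by (simp add: algebra_simps)
    then have "M \<le> D Y - (r + (\<Sum>j<m. q j))" using Y rK Qsb Mge by linarith
    then show "Y \<in> B'" unfolding B'_def using Y(1) DY ET by auto
  qed
  have B'meas: "B' \<in> sets Dt"
    unfolding B'_def spDt
    by (rule sets_Collect_PiM_borel[OF _ SDt]) measurable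
  have Var: "(\<Sum>j\<in>{..<m}. ((a j)\<^sup>2)\<^sup>2 * (2 * (sqrt eps)^4 + 4 * (sqrt eps)\<^sup>2 * (lam j * theta j - c j)\<^sup>2)) \<le> smax * (M * (2 + 4 * K))"
  proof -
    have "(\<Sum>j\<in>{..<m}. ((a j)\<^sup>2)\<^sup>2 * (2 * (sqrt eps)^4 + 4 * (sqrt eps)\<^sup>2 * (lam j * theta j - c j)\<^sup>2))
        = (\<Sum>j<m. 2 * (q j)\<^sup>2 + 4 * q j * \<rho> j)" using CA5 by simp
    also have "\<dots> \<le> (\<Sum>j<m. 2 * smax * \<sigma> j + 4 * smax * \<rho> j)"
    proof (rule sum_mono)
      fix j assume "j \<in> {..<m}"
      then have sj: "\<sigma> j \<le> smax" using smax_ge by auto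
      have "q j * q j \<le> \<sigma> j * \<sigma> j" using CA6[of j] qnn[of j] by (intro mult_mono) auto
      also have "\<dots> \<le> smax * \<sigma> j" using sj spos[of j] by (intro mult_right_mono) auto
      finally have "(q j)\<^sup>2 \<le> smax * \<sigma> j" by (simp add: power2_eq_square)
      moreover have "q j * \<rho> j \<le> smax * \<rho> j" using CA6[of j] sj rhonn[of j] by (intro mult_right_mono) auto
      ultimately show "2 * (q j)\<^sup>2 + 4 * q j * \<rho> j \<le> 2 * smax * \<sigma> j + 4 * smax * \<rho> j" by linarith
    qed
    also have "\<dots> = 2 * smax * sb + 4 * smax * r"
      unfolding sb_eq r_eq by (simp add: sum.distrib sum_distrib_left)
    also have "\<dots> \<le> 2 * smax * M + 4 * smax * (K * M)"
      using Mge rK smax_nn by (intro add_mono mult_left_mono) auto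
    also have "\<dots> = smax * (M * (2 + 4 * K))" by (simp add: algebra_simps)
    finally show ?thesis .
  qed
  have PB: "measure Dt B \<le> C2 / real m"
  proof -
    have "measure Dt B \<le> measure Dt B'" using BB' B'meas by (intro DP.finite_measure_mono)
    also have "\<dots> \<le> smax * (M * (2 + 4 * K)) / M\<^sup>2" using gc Var Mpos by (meson divide_right_mono order.trans zero_le_power2)
    also have "\<dots> \<le> C2 / real m"
    proof -
      have "smax * (M * (2 + 4 * K)) * real m = (real m * smax) * (M * (2 + 4 * K))" by simp
      also have "\<dots> \<le> (K * M) * (M * (2 + 4 * K))" using smK Mpos K1 by (intro mult_right_mono) auto
      also have "\<dots> = C2 * M\<^sup>2" unfolding C2_def by (simp add: power2_eq_square)
      finally have "smax * (M * (2 + 4 * K)) * real m \<le> C2 * M\<^sup>2" .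
      then show ?thesis using mpos Mpos by (simp add: field_simps)
    qed
    finally show ?thesis .
  qed
  
  have CA7': "post_mean lam eta eps tau' Y j = \<sigma> j * eta j / tau' j + a j * Y j" for Y j
    using CA7[of Y j] unfolding pm_def .
  have Ameas: "A \<in> sets (PiM UNIV (\<lambda>_. borel :: real measure))"
  proof -
    have "{v \<in> UNIV. inverse (10 * K) * M \<le> sq_norm (\<lambda>j. v j - theta j) \<and> sq_norm (\<lambda>j. v j - theta j) \<le> 10 * K * M} \<in> sets (PiM UNIV (\<lambda>_. borel :: real measure))"
      by (rule sets_Collect_PiM_borel) (unfold sq_norm_def, measurable)
    then show ?thesis unfolding A_def by simp
  qed
  have fm: "f \<in> borel_measurable Dt"
  proof -
    have "f = (\<lambda>Y. measure (PiM UNIV (\<lambda>j. if j < m then density lborel (normal_density (\<sigma> j * eta j / tau' j + a j * Y j) (sqrt (\<sigma> j))) else return borel (eta j))) A)"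
      unfolding f_def sieve_posterior_def \<sigma>_def[symmetric] CA7' ..
    also have "\<dots> \<in> borel_measurable Dt"
      by (rule posterior_measurable[OF SDt Ameas spos])
    finally show ?thesis .
  qed
  have fb: "0 \<le> f Y \<and> f Y \<le> 1" for Y
  proof -
    have "prob_space (sieve_posterior lam eta eps tau' m Y)"
      unfolding sieve_posterior_def \<sigma>_def[symmetric] using spos
      by (intro prob_space_PiM) (auto intro!: prob_space_normal_density prob_space_return)
    then show ?thesis unfolding f_def by (simp add: prob_space.prob_le_1)
  qed
  have fi: "integrable Dt f"
    using fb fm by (intro DP.integrable_const_bound[where B=1]) auto
  define g where "g = (\<lambda>Y. (1 - C1 / real m) - indicator B Y :: real)"
  have gi: "integrable Dt g"
    unfolding g_def using Bmeas by (intro Bochner_Integration.integrable_diff integrable_real_indicator) (auto simp: less_top[symmetric] DP.emeasure_finite)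
  have gf: "g Y \<le> f Y" for Y
  proof (cases "Y \<in> B")
    case True
    have "0 \<le> C1 / real m" unfolding C1_def using K1 mpos by simp
    then show ?thesis using True fb[of Y] by (simp add: g_def)
  next
    case False
    then have "D Y < (K + 2) * M" by (auto simp: B_def spDt)
    then show ?thesis using fY False by (simp add: g_def)
  qed
  have gint: "integral\<^sup>L Dt g = (1 - C1 / real m) - measure Dt B"
    unfolding g_def using Bmeas
    by (subst Bochner_Integration.integral_diff) (auto simp: DP.prob_space Int_absorb2 sets.sets_into_space integrable_real_indicator less_top[symmetric] DP.emeasure_finite)
  have "1 - (C1 + C2) / real m \<le> (1 - C1 / real m) - measure Dt B"
    using PB by (simp add: add_divide_distrib)
  also have "\<dots> = integral\<^sup>L Dt g" using gint by simp
  also have "\<dots> \<le> integral\<^sup>L Dt f" using gi fi gf by (intro integral_mono) auto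
  finally show "1 - (4 * K * (4 * K + 10) + K * (2 + 4 * K)) / real m \<le> (\<integral>Y. measure (sieve_posterior lam eta eps tau' m Y) A \<partial>data_law lam theta eps)"
    unfolding f_def Dt_def C1_def C2_def .
  have "integral\<^sup>L Dt f \<le> integral\<^sup>L Dt (\<lambda>_. 1)" using fi fb by (intro integral_mono) auto
  also have "\<dots> = 1" by (simp add: DP.prob_space)
  finally show "(\<integral>Y. measure (sieve_posterior lam eta eps tau' m Y) A \<partial>data_law lam theta eps) \<le> 1"
    unfolding f_def Dt_def .
qed

theorem mainTheorem4:
  fixes lam theta eta :: "nat \<Rightarrow> real"
    and tau :: "real \<Rightarrow> nat \<Rightarrow> real"
    and m :: "real \<Rightarrow> nat"
    and eps_th K :: real
  assumes lam_bdd: "bounded (range lam)"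
    and lam_nz: "\<And>j. lam j \<noteq> 0"
    and theta_l2: "summable (\<lambda>j. (theta j)\<^sup>2)"
    and diff_l2: "summable (\<lambda>j. (theta j - eta j)\<^sup>2)"
    and tau_pos: "\<And>eps j. 0 < eps \<Longrightarrow> eps < 1 \<Longrightarrow> 0 < tau eps j"
    and P: "assumption_P lam theta eta tau m eps_th K"
    and m_inf: "filterlim m at_top (at_right 0)"
    and sbar_0: "((\<lambda>eps. sigma_bar lam eps (tau eps) (m eps)) \<longlongrightarrow> 0) (at_right 0)"
  shows "((\<lambda>eps. \<integral>Y. measure (sieve_posterior lam eta eps (tau eps) (m eps) Y)
            {v. inverse (10 * K) * max (bias theta eta (m eps)) (sigma_bar lam eps (tau eps) (m eps))
                  \<le> sq_norm (\<lambda>j. v j - theta j)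
              \<and> sq_norm (\<lambda>j. v j - theta j)
                  \<le> 10 * K * max (bias theta eta (m eps)) (sigma_bar lam eps (tau eps) (m eps))}
          \<partial>data_law lam theta eps)
         \<longlongrightarrow> 1) (at_right 0)"
proof -
  from P have th: "0 < eps_th" "eps_th < 1" and K1: "1 \<le> K"
    and Pk: "\<And>eps. 0 < eps \<Longrightarrow> eps < eps_th \<Longrightarrow>
        max (rterm lam theta eta eps (tau eps) (m eps)) (real (m eps) * sigma_max lam eps (tau eps) (m eps))
        / max (bias theta eta (m eps)) (sigma_bar lam eps (tau eps) (m eps)) \<le> K"
    unfolding assumption_P_def by auto
  define C where "C = 4 * K * (4 * K + 10) + K * (2 + 4 * K)"
  define Fn where "Fn = (\<lambda>eps. \<integral>Y. measure (sieve_posterior lam eta eps (tau eps) (m eps) Y)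
            {v. inverse (10 * K) * max (bias theta eta (m eps)) (sigma_bar lam eps (tau eps) (m eps))
                  \<le> sq_norm (\<lambda>j. v j - theta j)
              \<and> sq_norm (\<lambda>j. v j - theta j)
                  \<le> 10 * K * max (bias theta eta (m eps)) (sigma_bar lam eps (tau eps) (m eps))}
          \<partial>data_law lam theta eps)"
  have ev1: "eventually (\<lambda>eps. 0 < eps \<and> eps < eps_th) (at_right (0::real))"
    using th by (auto simp: eventually_at_right intro!: exI[of _ eps_th])
  have ev2: "eventually (\<lambda>eps. 1 \<le> m eps) (at_right (0::real))"
    using m_inf by (simp add: filterlim_at_top)
  have ev: "eventually (\<lambda>eps. 1 - C / real (m eps) \<le> Fn eps \<and> Fn eps \<le> 1) (at_right (0::real))"
    using ev1 ev2
  proof eventually_elim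
    case (elim eps)
    then have e: "0 < eps" "eps < 1" using th by auto
    show ?case
      using eps_bound[OF e(1) elim(2) tau_pos[OF e] lam_nz diff_l2 K1 Pk[OF elim(1)[THEN conjunct1] elim(1)[THEN conjunct2]]]
      unfolding Fn_def C_def by auto
  qed
  have rm: "filterlim (\<lambda>eps. real (m eps)) at_top (at_right (0::real))"
    by (rule filterlim_compose[OF filterlim_real_sequentially m_inf])
  have "((\<lambda>eps. C * inverse (real (m eps))) \<longlongrightarrow> 0) (at_right (0::real))"
    by (intro tendsto_mult_right_zero tendsto_inverse_0_at_top rm)
  then have "((\<lambda>eps. 1 - C / real (m eps)) \<longlongrightarrow> 1 - 0) (at_right (0::real))"
    by (intro tendsto_diff tendsto_const) (simp add: divide_inverse)
  then have lo: "((\<lambda>eps. 1 - C / real (m eps)) \<longlongrightarrow> 1) (at_right (0::real))" by simp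
  have "(Fn \<longlongrightarrow> 1) (at_right (0::real))"
    by (rule tendsto_sandwich[OF _ _ lo tendsto_const]) (use ev in \<open>auto elim: eventually_mono\<close>)
  then show ?thesis unfolding Fn_def .
qed

end
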